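(* For $i\ge0$ and $j\ge0$, the map $\phi_i$ restricts to a linear isomorphism of $M_i(j)$ onto the $A_*$-subcomodule $N_{i-1}(j)\subset(A/\!/A(i-1))_*$.
   Context: $A_*$ is the mod $2$ dual Steenrod algebra with conjugate generators $\bar\xi_k$. For $i\ge-1$, $A(i)_*=\mathbb{F}_2[\bar\xi_1,\dots,\bar\xi_{i+1}]/(\bar\xi_1^{2^{i+1}},\dots,\bar\xi_{i+1}^2)$ and $(A/\!/A(i))_*=A_*\square_{A(i)_*}\mathbb{F}_2=\mathbb{F}_2[\bar\xi_1^{2^{i+1}},\bar\xi_2^{2^i},\dots,\bar\xi_{i+1}^2,\bar\xi_{i+2},\dots]$. Give $A_*$ the multiplicative "Brown–Gitler weight" in which $\bar\xi_k$ has weight $2^{k-1}$; every monomial of $(A/\!/A(i))_*$ has weight divisible by $2^{i+1}$. $N_i(j)\subset(A/\!/A(i))_*$ is the span of monomials of weight $\le2^{i+1}j$ (an $A_*$-subcomodule), and $M_i(j)\subset(A/\!/A(i))_*$ is the span of monomials of weight exactly $2^{i+1}j$. $\phi_i:(A/\!/A(i))_*\to(A/\!/A(i-1))_*$ is the ring map with $\phi_i(\bar\xi_k^{2^l})=\bar\xi_{k-1}^{2^l}$ for $k>1$ and $\phi_i(\bar\xi_1^{2^{i+1}})=1$. *)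

theory Defs
  imports Main "HOL-Library.Poly_Mapping" "HOL-Library.Z2"
begin

text \<open>Model of the dual Steenrod algebra A_* = F_2[xi_1, xi_2, ...] (conjugate generators).
  A monomial is a finitely supported exponent vector; index k (0-based) records the
  exponent of xi_(k+1).  An element of A_* is a finitely supported F_2-valued function
  on monomials (the type bit of HOL-Library.Z2 is the field F_2).\<close>

type_synonym mono = "nat \<Rightarrow>\<^sub>0 nat"
type_synonym dualA = "mono \<Rightarrow>\<^sub>0 bit"

definition bg_weight :: "mono \<Rightarrow> nat" where
  "bg_weight m = (\<Sum>k\<in>Poly_Mapping.keys m. Poly_Mapping.lookup m k * 2 ^ k)"

text \<open>Monomials of (A//A(i))_* = F_2[xi_1^(2^(i+1)), xi_2^(2^i), ..., xi_(i+1)^2, xi_(i+2), ...],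
  for integer i \<ge> -1: the exponent of xi_(k+1) must be divisible by 2^(i+1-k) when k \<le> i.\<close>
definition quot_mono :: "int \<Rightarrow> mono \<Rightarrow> bool" where
  "quot_mono i m = (\<forall>k::nat. int k \<le> i \<longrightarrow> 2 ^ nat (i + 1 - int k) dvd Poly_Mapping.lookup m k)"

definition AmodAi :: "int \<Rightarrow> dualA set" where
  "AmodAi i = {p. \<forall>m\<in>Poly_Mapping.keys p. quot_mono i m}"

definition N_sub :: "int \<Rightarrow> nat \<Rightarrow> dualA set" where
  "N_sub i j = {p. \<forall>m\<in>Poly_Mapping.keys p. quot_mono i m \<and> bg_weight m \<le> 2 ^ nat (i + 1) * j}"

definition M_sub :: "int \<Rightarrow> nat \<Rightarrow> dualA set" where
  "M_sub i j = {p. \<forall>m\<in>Poly_Mapping.keys p. quot_mono i m \<and> bg_weight m = 2 ^ nat (i + 1) * j}"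

text \<open>phi_i on monomials: xi_1^(e_1) xi_2^(e_2) ... |-> xi_1^(e_2) xi_2^(e_3) ...
  (the ring map with xi_k^(2^l) |-> xi_(k-1)^(2^l), xi_1^(2^(i+1)) |-> 1),
  extended F_2-linearly.  The formula does not depend on i; phi_i is its restriction
  to (A//A(i))_*.\<close>
definition shift_mono :: "mono \<Rightarrow> mono" where
  "shift_mono m = Poly_Mapping.map_key Suc m"

definition phi :: "int \<Rightarrow> dualA \<Rightarrow> dualA" where
  "phi i p = (\<Sum>m\<in>Poly_Mapping.keys p. Poly_Mapping.single (shift_mono m) (Poly_Mapping.lookup p m))"

end

theory Submission
  imports Defs
begin

lemma lookup_shift: "Poly_Mapping.lookup (shift_mono m) k = Poly_Mapping.lookup m (Suc k)"
  unfolding shift_mono_def by (simp add: map_key.rep_eq)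

lemma phi_sum_superset:
  assumes "finite K" "Poly_Mapping.keys p \<subseteq> K"
  shows "phi i p = (\<Sum>m\<in>K. Poly_Mapping.single (shift_mono m) (Poly_Mapping.lookup p m))"
  unfolding phi_def
  by (rule sum.mono_neutral_left) (use assms in \<open>auto simp: in_keys_iff\<close>)

lemma lookup_phi:
  "Poly_Mapping.lookup (phi i p) m' = (\<Sum>m\<in>Poly_Mapping.keys p. if shift_mono m = m' then Poly_Mapping.lookup p m else 0)"
  unfolding phi_def lookup_sum by (simp add: lookup_single when_def)

lemma phi_add: "phi i (p + q) = phi i p + phi i q"
proof -
  let ?K = "Poly_Mapping.keys p \<union> Poly_Mapping.keys q"
  have k: "Poly_Mapping.keys (p + q) \<subseteq> ?K" by (rule keys_add)
  have "phi i (p + q) = (\<Sum>m\<in>?K. Poly_Mapping.single (shift_mono m) (Poly_Mapping.lookup (p+q) m))"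
    using k by (intro phi_sum_superset) auto
  also have "\<dots> = (\<Sum>m\<in>?K. Poly_Mapping.single (shift_mono m) (Poly_Mapping.lookup p m))
      + (\<Sum>m\<in>?K. Poly_Mapping.single (shift_mono m) (Poly_Mapping.lookup q m))"
    by (simp only: lookup_add single_add sum.distrib)
  also have "\<dots> = phi i p + phi i q"
    by (subst (1 2) phi_sum_superset[symmetric]) auto
  finally show ?thesis .
qed

lemma bg_weight_superset:
  assumes "finite K" "Poly_Mapping.keys m \<subseteq> K"
  shows "bg_weight m = (\<Sum>k\<in>K. Poly_Mapping.lookup m k * 2 ^ k)"
  unfolding bg_weight_def
  by (rule sum.mono_neutral_left) (use assms in \<open>auto simp: in_keys_iff\<close>)

lemma bg_weight_shift:
  "bg_weight m = Poly_Mapping.lookup m 0 + 2 * bg_weight (shift_mono m)"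
proof -
  obtain N where N: "Poly_Mapping.keys m \<subseteq> {..<N}"
    using finite_keys[of m] by (auto simp: finite_nat_set_iff_bounded)
  have N2: "Poly_Mapping.keys (shift_mono m) \<subseteq> {..<N}"
  proof
    fix k assume "k \<in> Poly_Mapping.keys (shift_mono m)"
    then have "Suc k \<in> Poly_Mapping.keys m" by (simp add: in_keys_iff lookup_shift)
    then show "k \<in> {..<N}" using N by auto
  qed
  have "bg_weight m = (\<Sum>k<Suc N. Poly_Mapping.lookup m k * 2 ^ k)"
    using N by (intro bg_weight_superset) auto
  also have "\<dots> = Poly_Mapping.lookup m 0 + (\<Sum>k<N. Poly_Mapping.lookup m (Suc k) * 2 ^ Suc k)"
    by (subst sum.lessThan_Suc_shift) simp
  also have "\<dots> = Poly_Mapping.lookup m 0 + 2 * (\<Sum>k<N. Poly_Mapping.lookup (shift_mono m) k * 2 ^ k)"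
    by (simp add: lookup_shift sum_distrib_left mult.commute mult.left_commute)
  also have "\<dots> = Poly_Mapping.lookup m 0 + 2 * bg_weight (shift_mono m)"
    using N2 by (subst bg_weight_superset[of "{..<N}"]) auto
  finally show ?thesis .
qed

lemma weight_dvd:
  assumes "quot_mono (int i - 1) m"
  shows "2 ^ i dvd bg_weight m"
  unfolding bg_weight_def
proof (rule dvd_sum)
  fix k assume "k \<in> Poly_Mapping.keys m"
  show "2 ^ i dvd Poly_Mapping.lookup m k * 2 ^ k"
  proof (cases "k < i")
    case True
    then have "2 ^ (i - k) dvd Poly_Mapping.lookup m k"
      using assms unfolding quot_mono_def
      by (metis (no_types) diff_add_cancel le_diff_eq less_imp_of_nat_less nat_minus_as_int of_nat_le_iff less_imp_le_nat
           nat_int zle_diff1_eq)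
    then have "2 ^ (i - k) * 2 ^ k dvd Poly_Mapping.lookup m k * 2 ^ k" by (rule mult_dvd_mono) simp
    moreover have "(2::nat) ^ (i - k) * 2 ^ k = 2 ^ i" using True by (simp add: power_add[symmetric])
    ultimately show ?thesis by simp
  next
    case False
    then have "(2::nat) ^ i dvd 2 ^ k" by (simp add: le_imp_power_dvd)
    then show ?thesis by simp
  qed
qed

definition SS :: "nat \<Rightarrow> nat \<Rightarrow> mono set" where
  "SS i j = {m. quot_mono (int i) m \<and> bg_weight m = 2 ^ (i+1) * j}"
definition TT :: "nat \<Rightarrow> nat \<Rightarrow> mono set" where
  "TT i j = {m. quot_mono (int i - 1) m \<and> bg_weight m \<le> 2 ^ i * j}"

lemma M_sub_eq: "M_sub (int i) j = {p. Poly_Mapping.keys p \<subseteq> SS i j}"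
proof -
  have "nat (int i + 1) = i + 1" by simp
  then show ?thesis unfolding M_sub_def SS_def by auto
qed

lemma N_sub_eq: "N_sub (int i - 1) j = {p. Poly_Mapping.keys p \<subseteq> TT i j}"
  unfolding N_sub_def TT_def by auto

lemma shift_TT:
  assumes "m \<in> SS i j" shows "shift_mono m \<in> TT i j"
proof -
  have q: "quot_mono (int i) m" and w: "bg_weight m = 2 ^ (i+1) * j" using assms by (auto simp: SS_def)
  have "quot_mono (int i - 1) (shift_mono m)"
    unfolding quot_mono_def
  proof (intro allI impI)
    fix k :: nat assume "int k \<le> int i - 1"
    then have "int (Suc k) \<le> int i" by simp
    then have "2 ^ nat (int i + 1 - int (Suc k)) dvd Poly_Mapping.lookup m (Suc k)"
      using q unfolding quot_mono_def by blast
    moreover have "nat (int i + 1 - int (Suc k)) = nat (int i - 1 + 1 - int k)" by simp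
    ultimately show "2 ^ nat (int i - 1 + 1 - int k) dvd Poly_Mapping.lookup (shift_mono m) k"
      by (simp add: lookup_shift)
  qed
  moreover have "bg_weight (shift_mono m) \<le> 2 ^ i * j"
    using w bg_weight_shift[of m] by simp
  ultimately show ?thesis by (simp add: TT_def)
qed

lemma shift_inj: "inj_on shift_mono (SS i j)"
proof (rule inj_onI)
  fix a b assume a: "a \<in> SS i j" and b: "b \<in> SS i j" and e: "shift_mono a = shift_mono b"
  have "bg_weight a = bg_weight b" using a b by (simp add: SS_def)
  then have h0: "Poly_Mapping.lookup a 0 = Poly_Mapping.lookup b 0"
    using bg_weight_shift[of a] bg_weight_shift[of b] e by simp
  show "a = b"
  proof (rule poly_mapping_eqI)
    fix k show "Poly_Mapping.lookup a k = Poly_Mapping.lookup b k"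
    proof (cases k)
      case 0 then show ?thesis using h0 by simp
    next
      case (Suc k')
      have "Poly_Mapping.lookup (shift_mono a) k' = Poly_Mapping.lookup (shift_mono b) k'" using e by simp
      then show ?thesis using Suc by (simp add: lookup_shift)
    qed
  qed
qed

lemma shift_surj:
  assumes "m' \<in> TT i j" shows "\<exists>m\<in>SS i j. shift_mono m = m'"
proof -
  have q: "quot_mono (int i - 1) m'" and w: "bg_weight m' \<le> 2 ^ i * j" using assms by (auto simp: TT_def)
  obtain a where a: "bg_weight m' = 2 ^ i * a" using weight_dvd[OF q] by (auto elim: dvdE)
  have aj: "a \<le> j" using w a by simp
  define e0 where "e0 = 2 ^ (i+1) * j - 2 * bg_weight m'"
  have e0: "e0 = 2 ^ (i+1) * (j - a)" unfolding e0_def a by (simp add: diff_mult_distrib2)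
  define f where "f = (\<lambda>k. if k = 0 then e0 else Poly_Mapping.lookup m' (k - 1))"
  have fin: "finite {k. f k \<noteq> 0}"
  proof (rule finite_subset)
    show "{k. f k \<noteq> 0} \<subseteq> insert 0 (Suc ` Poly_Mapping.keys m')"
    proof
      fix k assume "k \<in> {k. f k \<noteq> 0}"
      then show "k \<in> insert 0 (Suc ` Poly_Mapping.keys m')"
        by (cases k) (auto simp: f_def in_keys_iff)
    qed
  qed auto
  define m where "m = Abs_poly_mapping f"
  have lm: "Poly_Mapping.lookup m = f" unfolding m_def using fin by simp
  have sh: "shift_mono m = m'"
    by (rule poly_mapping_eqI) (simp add: lookup_shift lm f_def)
  have "bg_weight m = 2 ^ (i+1) * j"
    using bg_weight_shift[of m] sh lm w by (simp add: f_def e0_def)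
  moreover have "quot_mono (int i) m"
    unfolding quot_mono_def
  proof (intro allI impI)
    fix k :: nat assume k: "int k \<le> int i"
    show "2 ^ nat (int i + 1 - int k) dvd Poly_Mapping.lookup m k"
    proof (cases k)
      case 0
      have "nat (int i + 1) = i + 1" by simp
      then show ?thesis using 0 by (simp add: lm f_def e0)
    next
      case (Suc k')
      then have "int k' \<le> int i - 1" using k by simp
      then have "2 ^ nat (int i - 1 + 1 - int k') dvd Poly_Mapping.lookup m' k'"
        using q unfolding quot_mono_def by blast
      moreover have "nat (int i + 1 - int k) = nat (int i - 1 + 1 - int k')" using Suc by simp
      ultimately show ?thesis using Suc by (simp add: lm f_def)
    qed
  qed
  ultimately show ?thesis using sh by (auto simp: SS_def)
qed

lemma phi_lookup_S:
  assumes "Poly_Mapping.keys p \<subseteq> SS i j" "m \<in> SS i j"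
  shows "Poly_Mapping.lookup (phi r p) (shift_mono m) = Poly_Mapping.lookup p m"
proof -
  have "Poly_Mapping.lookup (phi r p) (shift_mono m) =
      (\<Sum>m0\<in>Poly_Mapping.keys p. if m0 = m then Poly_Mapping.lookup p m0 else 0)"
    unfolding lookup_phi
  proof (rule sum.cong)
    fix m0 assume "m0 \<in> Poly_Mapping.keys p"
    then have "m0 \<in> SS i j" using assms by auto
    then have "(shift_mono m0 = shift_mono m) = (m0 = m)"
      using shift_inj[of i j] assms(2) by (auto dest: inj_onD)
    then show "(if shift_mono m0 = shift_mono m then Poly_Mapping.lookup p m0 else 0) =
        (if m0 = m then Poly_Mapping.lookup p m0 else 0)" by simp
  qed simp
  also have "\<dots> = Poly_Mapping.lookup p m"
    by (simp add: in_keys_iff)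
  finally show ?thesis .
qed

lemma phi_lookup_out:
  assumes "m' \<notin> shift_mono ` Poly_Mapping.keys p"
  shows "Poly_Mapping.lookup (phi r p) m' = 0"
  unfolding lookup_phi using assms by (intro sum.neutral) auto

lemma keys_phi: "Poly_Mapping.keys (phi r p) \<subseteq> shift_mono ` Poly_Mapping.keys p"
proof
  fix x assume "x \<in> Poly_Mapping.keys (phi r p)"
  then have "Poly_Mapping.lookup (phi r p) x \<noteq> 0" by (simp add: in_keys_iff)
  then show "x \<in> shift_mono ` Poly_Mapping.keys p" using phi_lookup_out by blast
qed

lemma phi_zero: "phi r 0 = 0" unfolding phi_def by simp

theorem lemma5p2:
  fixes i j :: nat
  shows "(\<forall>p\<in>M_sub (int i) j. \<forall>q\<in>M_sub (int i) j. phi (int i) (p + q) = phi (int i) p + phi (int i) q)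
       \<and> (\<forall>c::bit. \<forall>p\<in>M_sub (int i) j. phi (int i) (Poly_Mapping.map ((*) c) p) = Poly_Mapping.map ((*) c) (phi (int i) p))
       \<and> bij_betw (phi (int i)) (M_sub (int i) j) (N_sub (int i - 1) j)"
proof (intro conjI ballI allI)
  fix p q show "phi (int i) (p + q) = phi (int i) p + phi (int i) q" by (rule phi_add)
next
  fix c :: bit and p
  have m0: "Poly_Mapping.map ((*) 0) x = 0" for x :: dualA
    by (rule poly_mapping_eqI) (simp add: map.rep_eq when_def)
  have m1: "Poly_Mapping.map ((*) 1) x = x" for x :: dualA
    by (rule poly_mapping_eqI) (simp add: map.rep_eq when_def)
  show "phi (int i) (Poly_Mapping.map ((*) c) p) = Poly_Mapping.map ((*) c) (phi (int i) p)"
    by (cases c) (simp_all only: m0 m1 phi_zero)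
next
  show "bij_betw (phi (int i)) (M_sub (int i) j) (N_sub (int i - 1) j)"
    unfolding bij_betw_def M_sub_eq N_sub_eq
  proof (intro conjI)
    show "inj_on (phi (int i)) {p. Poly_Mapping.keys p \<subseteq> SS i j}"
    proof (rule inj_onI)
      fix p q assume p: "p \<in> {p. Poly_Mapping.keys p \<subseteq> SS i j}" and q: "q \<in> {p. Poly_Mapping.keys p \<subseteq> SS i j}"
        and e: "phi (int i) p = phi (int i) q"
      show "p = q"
      proof (rule poly_mapping_eqI)
        fix m show "Poly_Mapping.lookup p m = Poly_Mapping.lookup q m"
        proof (cases "m \<in> SS i j")
          case True
          then show ?thesis using phi_lookup_S[of p i j m "int i"] phi_lookup_S[of q i j m "int i"] p q e by simp
        next
          case False
          then have "m \<notin> Poly_Mapping.keys p" "m \<notin> Poly_Mapping.keys q" using p q by auto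
          then show ?thesis by (simp add: in_keys_iff)
        qed
      qed
    qed
  next
    show "phi (int i) ` {p. Poly_Mapping.keys p \<subseteq> SS i j} = {p. Poly_Mapping.keys p \<subseteq> TT i j}"
    proof (intro equalityI subsetI)
      fix x assume "x \<in> phi (int i) ` {p. Poly_Mapping.keys p \<subseteq> SS i j}"
      then obtain p where p: "Poly_Mapping.keys p \<subseteq> SS i j" and x: "x = phi (int i) p" by auto
      show "x \<in> {p. Poly_Mapping.keys p \<subseteq> TT i j}"
        using keys_phi[of "int i" p] p shift_TT unfolding x by blast
    next
      fix q :: dualA assume "q \<in> {p. Poly_Mapping.keys p \<subseteq> TT i j}"
      then have q: "Poly_Mapping.keys q \<subseteq> TT i j" by simp
      define g where "g = inv_into (SS i j) shift_mono"
      define f where "f = (\<lambda>m. if m \<in> SS i j then Poly_Mapping.lookup q (shift_mono m) else 0)"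
      have fin: "finite {m. f m \<noteq> 0}"
      proof (rule finite_subset)
        show "{m. f m \<noteq> 0} \<subseteq> g ` Poly_Mapping.keys q"
        proof
          fix m assume "m \<in> {m. f m \<noteq> 0}"
          then have "m \<in> SS i j" "shift_mono m \<in> Poly_Mapping.keys q"
            by (auto simp: f_def in_keys_iff split: if_splits)
          moreover have "g (shift_mono m) = m" using \<open>m \<in> SS i j\<close> shift_inj unfolding g_def
            by (rule inv_into_f_f[rotated])
          ultimately show "m \<in> g ` Poly_Mapping.keys q" by (metis imageI)
        qed
      qed auto
      define p :: dualA where "p = Abs_poly_mapping f"
      have lp: "Poly_Mapping.lookup p = f" unfolding p_def using fin by simp
      have kp: "Poly_Mapping.keys p \<subseteq> SS i j"
        by (auto simp: in_keys_iff lp f_def split: if_splits)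
      have "phi (int i) p = q"
      proof (rule poly_mapping_eqI)
        fix m' show "Poly_Mapping.lookup (phi (int i) p) m' = Poly_Mapping.lookup q m'"
        proof (cases "m' \<in> shift_mono ` Poly_Mapping.keys p")
          case True
          then obtain m where m: "m \<in> Poly_Mapping.keys p" "m' = shift_mono m" by auto
          have "m \<in> SS i j" using m kp by auto
          then show ?thesis using phi_lookup_S[OF kp, of m "int i"] m by (simp add: lp f_def)
        next
          case False
          have "Poly_Mapping.lookup q m' = 0"
          proof (rule ccontr)
            assume nz: "Poly_Mapping.lookup q m' \<noteq> 0"
            then have "m' \<in> TT i j" using q by (auto simp: in_keys_iff)
            then obtain m where m: "m \<in> SS i j" "shift_mono m = m'" using shift_surj by blast
            then have "m \<in> Poly_Mapping.keys p" using nz by (simp add: in_keys_iff lp f_def)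
            then show False using False m by auto
          qed
          then show ?thesis using phi_lookup_out[OF False] by simp
        qed
      qed
      then show "q \<in> phi (int i) ` {p. Poly_Mapping.keys p \<subseteq> SS i j}" using kp by auto
    qed
  qed
qed

end
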